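(* Let $c\in Z^1(G,M(\mathbb{A})^\times)$ be continuous. (i) If $c^{-1}:r\mapsto c(r)^{-1}$ is also continuous, then for every $a\in\mathbb{A}$ the map $r\in G\mapsto\alpha_r(a)\,c(r)\in M(\mathbb{A})$ is continuous. (ii) The same conclusion holds for any continuous $c\in Z^1(G,Z(M(\mathbb{A}))^\times)$.
   Context: $\mathbb{A}$ is a $C^*$-algebra, $M(\mathbb{A})$ its multiplier algebra with the strict topology (all continuity statements are for this topology), $M(\mathbb{A})^\times$ its invertible elements, $Z(M(\mathbb{A}))^\times$ the invertible central multipliers. $(\mathbb{A},G,\alpha)$ is a $C^*$-dynamical system ($G$ second-countable locally compact, $\alpha:G\to\mathrm{Aut}(\mathbb{A})$ with $r\mapsto\alpha_r(a)$ norm-continuous), extended to $M(\mathbb{A})$. For a subgroup $X\subset M(\mathbb{A})^\times$, $Z^1(G,X)$ is the set of maps $c:G\to X$ with $c(rr')=c(r)\alpha_r[c(r')]$ for all $r,r'$. *)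

theory Defs
  imports "HOL-Analysis.Analysis"
begin

text \<open>A (possibly non-unital) complex C*-algebra: a real Banach algebra carrying a
complex scalar multiplication scaleC extending scaleR, and an involution star
satisfying the C*-identity.\<close>

definition cstar_algebra ::
  "(complex \<Rightarrow> 'a::{real_normed_algebra,banach} \<Rightarrow> 'a) \<Rightarrow> ('a \<Rightarrow> 'a) \<Rightarrow> bool" where
  "cstar_algebra scaleC star \<longleftrightarrow>
     (\<forall>x a. scaleC (complex_of_real x) a = scaleR x a) \<and>
     (\<forall>z w a. scaleC (z + w) a = scaleC z a + scaleC w a) \<and>
     (\<forall>z a b. scaleC z (a + b) = scaleC z a + scaleC z b) \<and>
     (\<forall>z w a. scaleC z (scaleC w a) = scaleC (z * w) a) \<and>
     (\<forall>z a. norm (scaleC z a) = cmod z * norm a) \<and>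
     (\<forall>z a b. scaleC z (a * b) = scaleC z a * b \<and> scaleC z (a * b) = a * scaleC z b) \<and>
     (\<forall>a. star (star a) = a) \<and>
     (\<forall>a b. star (a + b) = star a + star b) \<and>
     (\<forall>z a. star (scaleC z a) = scaleC (cnj z) (star a)) \<and>
     (\<forall>a b. star (a * b) = star b * star a) \<and>
     (\<forall>a. norm (star a * a) = (norm a)\<^sup>2)"

definition star_aut ::
  "(complex \<Rightarrow> 'a::{real_normed_algebra,banach} \<Rightarrow> 'a) \<Rightarrow> ('a \<Rightarrow> 'a) \<Rightarrow> ('a \<Rightarrow> 'a) \<Rightarrow> bool" where
  "star_aut scaleC star f \<longleftrightarrow> bij f \<and>
     (\<forall>a b. f (a + b) = f a + f b) \<and>
     (\<forall>z a. f (scaleC z a) = scaleC z (f a)) \<and>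
     (\<forall>a b. f (a * b) = f a * f b) \<and>
     (\<forall>a. f (star a) = star (f a))"

text \<open>C*-dynamical system (A,G,alpha); the group G is written additively.\<close>

definition cstar_dynamical_system ::
  "(complex \<Rightarrow> 'a::{real_normed_algebra,banach} \<Rightarrow> 'a) \<Rightarrow> ('a \<Rightarrow> 'a)
     \<Rightarrow> ('g::topological_group_add \<Rightarrow> 'a \<Rightarrow> 'a) \<Rightarrow> bool" where
  "cstar_dynamical_system scaleC star \<alpha> \<longleftrightarrow>
     cstar_algebra scaleC star \<and>
     (\<forall>r. star_aut scaleC star (\<alpha> r)) \<and>
     \<alpha> 0 = id \<and> (\<forall>r s. \<alpha> (r + s) = \<alpha> r \<circ> \<alpha> s) \<and>
     (\<forall>a. continuous_on UNIV (\<lambda>r. \<alpha> r a))"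

type_synonym 'a mult = "('a \<Rightarrow> 'a) \<times> ('a \<Rightarrow> 'a)"

text \<open>A multiplier m = (L,R) acts by m a = L a and a m = R a.\<close>

definition multipliers :: "'a::real_normed_algebra mult set" where
  "multipliers = {(L, R). \<forall>a b. a * L b = R a * b}"

definition mmult :: "'a::real_normed_algebra mult \<Rightarrow> 'a mult \<Rightarrow> 'a mult" where
  "mmult m n = (fst m \<circ> fst n, snd n \<circ> snd m)"

definition munit :: "'a mult" where
  "munit = (id, id)"

definition membed :: "'a::real_normed_algebra \<Rightarrow> 'a mult" where
  "membed a = ((\<lambda>b. a * b), (\<lambda>b. b * a))"

definition minvertible :: "'a::real_normed_algebra mult \<Rightarrow> bool" where
  "minvertible m \<longleftrightarrow> m \<in> multipliers \<and>
     (\<exists>n \<in> multipliers. mmult m n = munit \<and> mmult n m = munit)"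

definition minv :: "'a::real_normed_algebra mult \<Rightarrow> 'a mult" where
  "minv m = (SOME n. n \<in> multipliers \<and> mmult m n = munit \<and> mmult n m = munit)"

definition mult_units :: "'a::real_normed_algebra mult set" where
  "mult_units = {m. minvertible m}"

definition central_mult_units :: "'a::real_normed_algebra mult set" where
  "central_mult_units = {m. minvertible m \<and> (\<forall>n \<in> multipliers. mmult m n = mmult n m)}"

definition mext :: "('a \<Rightarrow> 'a) \<Rightarrow> 'a mult \<Rightarrow> 'a mult" where
  "mext f m = (f \<circ> fst m \<circ> inv f, f \<circ> snd m \<circ> inv f)"

text \<open>Strict topology on M(A): initial topology for the maps m \<mapsto> m a and
m \<mapsto> a m (a \<in> A) into A with its norm topology, i.e. the topology of the
seminorms m \<mapsto> norm (m a), norm (a m).\<close>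

definition strict_topology :: "'a::real_normed_algebra mult topology" where
  "strict_topology = subtopology
     (topology_generated_by
        ({{m. fst m a \<in> U} | a U. open U} \<union> {{m. snd m a \<in> U} | a U. open U}))
     multipliers"

definition strictly_continuous :: "('g::topological_space \<Rightarrow> 'a::real_normed_algebra mult) \<Rightarrow> bool" where
  "strictly_continuous f \<longleftrightarrow> continuous_map euclidean strict_topology f"

definition cocycles :: "('g::group_add \<Rightarrow> 'a \<Rightarrow> 'a) \<Rightarrow> 'a::real_normed_algebra mult set
    \<Rightarrow> ('g \<Rightarrow> 'a mult) set" where
  "cocycles \<alpha> X = {c. (\<forall>r. c r \<in> X) \<and>
      (\<forall>r r'. c (r + r') = mmult (c r) (mext (\<alpha> r) (c r')))}"

end

theory Submission
  imports Defs
begin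

lemma cstar_star0:
  assumes "cstar_algebra scaleC star" shows "star 0 = 0"
proof -
  have "star (0+0) = star 0 + star 0" using assms unfolding cstar_algebra_def by blast
  then show ?thesis by simp
qed

lemma cstar_norm_star:
  assumes "cstar_algebra scaleC (star::'a::{real_normed_algebra,banach} \<Rightarrow> 'a)" shows "norm (star y) = norm y"
proof -
  have ci: "\<And>a. norm (star a * a) = (norm a)\<^sup>2" and ss: "\<And>a. star (star a) = a"
    using assms unfolding cstar_algebra_def by blast+
  have le: "norm a \<le> norm (star a)" for a
  proof (cases "a = 0")
    case True then show ?thesis by simp
  next
    case False
    have "(norm a)\<^sup>2 \<le> norm (star a) * norm a" using ci[of a] norm_mult_ineq[of "star a" a] by simp
    then show ?thesis using False by (simp add: power2_eq_square)
  qed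
  show ?thesis using le[of y] le[of "star y"] ss[of y] by simp
qed

lemma cstar_norm_mult_star:
  assumes "cstar_algebra scaleC (star::'a::{real_normed_algebra,banach} \<Rightarrow> 'a)" shows "norm (y * star y) = (norm y)\<^sup>2"
proof -
  have ci: "\<And>a. norm (star a * a) = (norm a)\<^sup>2" and ss: "\<And>a. star (star a) = a"
    using assms unfolding cstar_algebra_def by blast+
  have "norm (star (star y) * star y) = (norm (star y))\<^sup>2" by (rule ci)
  then show ?thesis using ss[of y] cstar_norm_star[OF assms] by simp
qed

lemma cstar_nondeg:
  assumes "cstar_algebra scaleC (star::'a::{real_normed_algebra,banach} \<Rightarrow> 'a)" and "\<And>b. (z::'a) * b = 0"
  shows "z = 0"
proof -
  have "(norm z)\<^sup>2 = 0" using cstar_norm_mult_star[OF assms(1), of z] assms(2)[of "star z"] by simp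
  then show ?thesis by simp
qed

lemma ubp_mult:
  fixes Y :: "'a::{real_normed_algebra,banach} set"
  assumes pb: "\<And>x. \<exists>B. \<forall>y\<in>Y. norm (x * y) \<le> B"
  shows "\<exists>M. \<forall>x. \<forall>y\<in>Y. norm (x * y) \<le> M * norm x"
proof -
  define E where "E n = {x. \<forall>y\<in>Y. norm (x * y) \<le> real n}" for n :: nat
  have clE: "closed (E n)" for n
  proof -
    have "E n = (\<Inter>y\<in>Y. {x. norm (x * y) \<le> real n})" unfolding E_def by auto
    moreover have "closed {x. norm (x * y) \<le> real n}" for y :: 'a
      proof -
      have "continuous_on UNIV (\<lambda>x::'a. x * y)"
        using continuous_on_mult[OF continuous_on_id continuous_on_const, of UNIV y] by simp
      then show ?thesis by (intro closed_Collect_le continuous_on_norm continuous_on_const)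
    qed
    ultimately show ?thesis by auto
  qed
  have un: "\<Union> (range E) = UNIV"
  proof (rule set_eqI, rule iffI)
    fix x assume "x \<in> \<Union> (range E)" then show "x \<in> UNIV" by simp
  next
    fix x :: 'a assume "x \<in> UNIV"
    obtain B where B: "\<forall>y\<in>Y. norm (x * y) \<le> B" using pb by blast
    obtain n where "B \<le> real n" using real_arch_simple by blast
    then have "x \<in> E n" using B unfolding E_def by force
    then show "x \<in> \<Union> (range E)" by blast
  qed
  have "\<exists>n. interior (E n) \<noteq> {}"
  proof (rule ccontr)
    assume "\<not> ?thesis"
    then have "euclidean interior_of \<Union> (range E) = {}"
      by (intro Baire_category_alt) (auto simp: completely_metrizable_space_euclidean clE euclidean_interior_of)
    then show False using un by (simp add: euclidean_interior_of)
  qed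
  then obtain n x0 where "x0 \<in> interior (E n)" by blast
  then obtain e where e: "e > 0" "ball x0 e \<subseteq> E n" by (meson open_contains_ball open_interior interior_subset subset_trans)
  have "\<forall>x. \<forall>y\<in>Y. norm (x * y) \<le> (4 * real n / e) * norm x"
  proof (intro allI ballI)
    fix x y assume y: "y \<in> Y"
    show "norm (x * y) \<le> (4 * real n / e) * norm x"
    proof (cases "x = 0")
      case True then show ?thesis by simp
    next
      case False
      define t where "t = e / (2 * norm x)"
      have t: "t > 0" using e False unfolding t_def by simp
      have "norm (t *\<^sub>R x) = e/2" using False t e unfolding t_def by simp
      then have "x0 + t *\<^sub>R x \<in> E n" using e by (intro subsetD[OF e(2)]) (simp add: dist_norm)
      moreover have "x0 \<in> E n" using e by auto
      ultimately have a: "norm ((x0 + t *\<^sub>R x) * y) \<le> real n" "norm (x0 * y) \<le> real n"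
        using y unfolding E_def by auto
      have "(t *\<^sub>R x) * y = (x0 + t *\<^sub>R x) * y - x0 * y" by (simp add: algebra_simps)
      then have "norm ((t *\<^sub>R x) * y) \<le> 2 * real n"
        using norm_triangle_ineq4[of "(x0 + t *\<^sub>R x) * y" "x0 * y"] a by simp
      then have "t * norm (x * y) \<le> 2 * real n" using t by simp
      then have "norm (x * y) \<le> 2 * real n / t" using t by (simp add: field_simps)
      also have "2 * real n / t = (4 * real n / e) * norm x" using False e unfolding t_def by (simp add: field_simps)
      finally show ?thesis .
    qed
  qed
  then show ?thesis by blast
qed

lemma R_diff:
  assumes cs: "cstar_algebra scaleC (star::'a::{real_normed_algebra,banach} \<Rightarrow> 'a)"
    and dc: "\<And>x b. x * L b = R x * (b::'a)"
  shows "R (x - y) = R x - R y"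
proof -
  have "(R (x - y) - (R x - R y)) * b = 0" for b
    using dc[of "x - y" b] dc[of x b] dc[of y b] by (simp add: algebra_simps)
  then have "R (x - y) - (R x - R y) = 0" by (rule cstar_nondeg[OF cs])
  then show ?thesis by simp
qed

lemma R_bound:
  assumes cs: "cstar_algebra scaleC (star::'a::{real_normed_algebra,banach} \<Rightarrow> 'a)"
    and dc: "\<And>r x b. x * L r b = R r x * (b::'a)"
    and Rc: "\<And>x. continuous_on UNIV (\<lambda>r. R r x)"
    and K: "compact (K::'g::topological_space set)"
  shows "\<exists>M. \<forall>r\<in>K. \<forall>x. norm (R r x) \<le> M * norm x"
proof -
  define Y where "Y = {L r b | r b. r \<in> K \<and> norm b \<le> 1}"
  have "\<exists>B. \<forall>y\<in>Y. norm (x * y) \<le> B" for x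
  proof -
    have "compact ((\<lambda>r. R r x) ` K)"
      using Rc[of x] K by (meson compact_continuous_image continuous_on_subset subset_UNIV)
    then obtain B where B: "\<forall>z\<in>(\<lambda>r. R r x) ` K. norm z \<le> B"
      using compact_imp_bounded bounded_iff by metis
    have "norm (x * y) \<le> max B 0" if "y \<in> Y" for y
    proof -
      obtain r b where rb: "y = L r b" "r \<in> K" "norm b \<le> 1" using \<open>y \<in> Y\<close> unfolding Y_def by blast
      have "norm (x * y) = norm (R r x * b)" using dc rb by simp
      also have "\<dots> \<le> norm (R r x) * norm b" by (rule norm_mult_ineq)
      also have "\<dots> \<le> max B 0 * 1"
        using B rb by (intro mult_mono) auto
      finally show ?thesis by simp
    qed
    then show ?thesis by blast
  qed
  then obtain M where M: "\<forall>x. \<forall>y\<in>Y. norm (x * y) \<le> M * norm x" using ubp_mult by metis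
  have "norm (R r x) \<le> M * norm x" if r: "r \<in> K" for r x
  proof (cases "R r x = 0")
    case True
    have "0 \<le> M * norm x"
    proof -
      have "L r 0 \<in> Y" using r unfolding Y_def by force
      then show ?thesis using M norm_ge_zero order_trans by metis
    qed
    then show ?thesis using True by simp
  next
    case False
    let ?y = "R r x"
    define b where "b = (1 / norm ?y) *\<^sub>R star ?y"
    have nb: "norm b = 1" using False unfolding b_def by (simp add: cstar_norm_star[OF cs])
    have "L r b \<in> Y" using r nb unfolding Y_def by force
    then have "norm (x * L r b) \<le> M * norm x" using M by blast
    moreover have "x * L r b = (1 / norm ?y) *\<^sub>R (?y * star ?y)"
      using dc unfolding b_def by simp
    moreover have "norm ((1 / norm ?y) *\<^sub>R (?y * star ?y)) = norm ?y"
      using False by (simp add: cstar_norm_mult_star[OF cs] power2_eq_square)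
    ultimately show ?thesis by simp
  qed
  then show ?thesis by blast
qed

lemma core:
  fixes R L :: "'g::t2_space \<Rightarrow> 'a::{real_normed_algebra,banach} \<Rightarrow> 'a"
  assumes cs: "cstar_algebra scaleC (star::'a \<Rightarrow> 'a)"
    and lc: "locally_compact_space (euclidean :: 'g topology)"
    and dc: "\<And>r x b. x * L r b = R r x * (b::'a)"
    and Rc: "\<And>x. continuous_on UNIV (\<lambda>r. R r x)"
    and xc: "continuous_on UNIV xf"
  shows "continuous_on UNIV (\<lambda>r. R r (xf r))"
proof (rule iffD2[OF continuous_on_eq_continuous_at[OF open_UNIV]], intro ballI)
  fix r0 :: 'g
  obtain U K where UK: "open U" "compact K" "r0 \<in> U" "U \<subseteq> K"
    using lc unfolding locally_compact_space_def by (simp add: compactin_euclidean_iff) blast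
  obtain M where M: "\<forall>r\<in>K. \<forall>x. norm (R r x) \<le> M * norm x"
    using R_bound[OF cs dc Rc UK(2)] by blast
  have ev: "eventually (\<lambda>r. r \<in> U) (at r0)" using UK by (simp add: eventually_at_topological) blast
  have t1: "((\<lambda>r. xf r) \<longlongrightarrow> xf r0) (at r0)"
    using xc by (simp add: continuous_on_eq_continuous_at isCont_def)
  have t2: "((\<lambda>r. R r (xf r0)) \<longlongrightarrow> R r0 (xf r0)) (at r0)"
    using Rc[of "xf r0"] by (simp add: continuous_on_eq_continuous_at isCont_def)
  have a: "((\<lambda>r. R r (xf r - xf r0)) \<longlongrightarrow> 0) (at r0)"
  proof (rule Lim_null_comparison)
    show "eventually (\<lambda>r. norm (R r (xf r - xf r0)) \<le> M * norm (xf r - xf r0)) (at r0)"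
      using ev UK(4) M by (auto elim!: eventually_mono)
    have "((\<lambda>r. xf r - xf r0) \<longlongrightarrow> 0) (at r0)" using t1 by (simp add: LIM_zero)
    then show "((\<lambda>r. M * norm (xf r - xf r0)) \<longlongrightarrow> 0) (at r0)"
      using tendsto_mult_right_zero tendsto_norm_zero by blast
  qed
  have "((\<lambda>r. R r (xf r - xf r0) + R r (xf r0)) \<longlongrightarrow> 0 + R r0 (xf r0)) (at r0)"
    by (intro tendsto_add a t2)
  moreover have "R r (xf r - xf r0) + R r (xf r0) = R r (xf r)" for r
    using R_diff[OF cs dc, of r] by simp
  ultimately show "isCont (\<lambda>r. R r (xf r)) r0" by (simp add: isCont_def)
qed

lemma cont_preimage_iff:
  "continuous_on UNIV g \<longleftrightarrow> (\<forall>U. open U \<longrightarrow> open (g -` U))"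
  using continuous_on_open_vimage[OF open_UNIV, of g] by simp

lemma strictly_continuous_iff:
  fixes f :: "'g::topological_space \<Rightarrow> 'a::real_normed_algebra mult"
  shows "strictly_continuous f \<longleftrightarrow> (\<forall>r. f r \<in> multipliers) \<and>
     (\<forall>a. continuous_on UNIV (\<lambda>r. fst (f r) a)) \<and> (\<forall>a. continuous_on UNIV (\<lambda>r. snd (f r) a))"
proof -
  define S :: "'a mult set set" where
    "S = {{m. fst m a \<in> U} | a U. open U} \<union> {{m. snd m a \<in> U} | a U. open U}"
  have US: "\<Union> S = UNIV"
  proof -
    have "{m. fst m 0 \<in> UNIV} \<in> S" unfolding S_def by blast
    then show ?thesis by auto
  qed
  have vim1: "f -` {m. fst m a \<in> U} = (\<lambda>r. fst (f r) a) -` U" for a U by auto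
  have vim2: "f -` {m. snd m a \<in> U} = (\<lambda>r. snd (f r) a) -` U" for a U by auto
  have "(\<forall>U. U \<in> S \<longrightarrow> openin euclidean (f -` U \<inter> topspace euclidean)) \<longleftrightarrow>
     (\<forall>a. continuous_on UNIV (\<lambda>r. fst (f r) a)) \<and> (\<forall>a. continuous_on UNIV (\<lambda>r. snd (f r) a))"
    unfolding cont_preimage_iff S_def by (simp, safe; metis vim1 vim2)
  then show ?thesis
    unfolding strictly_continuous_def strict_topology_def continuous_map_in_subtopology
      continuous_on_generated_topo_iff S_def[symmetric] using US by (auto simp: Pi_iff)
qed

lemma product_sc:
  fixes c :: "'g::{topological_group_add, t2_space} \<Rightarrow> 'a::{real_normed_algebra,banach} mult"
  assumes lc: "locally_compact_space (euclidean :: 'g topology)"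
    and ds: "cstar_dynamical_system scaleC star \<alpha>"
    and sc: "strictly_continuous c"
  shows "strictly_continuous (\<lambda>r. mmult (membed (\<alpha> r a)) (c r))"
proof -
  have cs: "cstar_algebra scaleC star" and ac: "continuous_on UNIV (\<lambda>r. \<alpha> r a)"
    using ds unfolding cstar_dynamical_system_def by blast+
  have cm: "\<forall>r. c r \<in> multipliers" and Lc: "\<forall>b. continuous_on UNIV (\<lambda>r. fst (c r) b)"
    and Rc: "\<forall>b. continuous_on UNIV (\<lambda>r. snd (c r) b)"
    using sc unfolding strictly_continuous_iff by blast+
  have dc: "x * fst (c r) b = snd (c r) x * b" for r x b
    using cm[rule_format, of r] unfolding multipliers_def by (cases "c r") auto
  show ?thesis unfolding strictly_continuous_iff
  proof (intro conjI allI)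
    fix r
    show "mmult (membed (\<alpha> r a)) (c r) \<in> multipliers"
      unfolding multipliers_def mmult_def membed_def
      by (auto simp: mult.assoc dc[symmetric])
  next
    fix b
    show "continuous_on UNIV (\<lambda>r. fst (mmult (membed (\<alpha> r a)) (c r)) b)"
      unfolding mmult_def membed_def using ac Lc by (simp add: continuous_on_mult)
  next
    fix b
    have "continuous_on UNIV (\<lambda>r. snd (c r) (b * \<alpha> r a))"
    proof (rule core[OF cs lc, where L = "\<lambda>r. fst (c r)" and R = "\<lambda>r. snd (c r)" and xf = "\<lambda>r. b * \<alpha> r a"])
      show "x * fst (c r) y = snd (c r) x * y" for r x y by (rule dc)
      show "continuous_on UNIV (\<lambda>r. snd (c r) x)" for x using Rc by blast
      show "continuous_on UNIV (\<lambda>r. b * \<alpha> r a)" using ac by (simp add: continuous_on_mult)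
    qed
    then show "continuous_on UNIV (\<lambda>r. snd (mmult (membed (\<alpha> r a)) (c r)) b)"
      unfolding mmult_def membed_def by simp
  qed
qed

theorem mainTheorem11:
  fixes scaleC :: "complex \<Rightarrow> 'a::{real_normed_algebra,banach} \<Rightarrow> 'a"
    and star :: "'a \<Rightarrow> 'a"
    and \<alpha> :: "'g::{topological_group_add, t2_space, second_countable_topology} \<Rightarrow> 'a \<Rightarrow> 'a"
  assumes "locally_compact_space (euclidean :: 'g topology)"
    and "cstar_dynamical_system scaleC star \<alpha>"
  shows "(\<forall>c. c \<in> cocycles \<alpha> mult_units \<and> strictly_continuous c
              \<and> strictly_continuous (\<lambda>r. minv (c r))
          \<longrightarrow> (\<forall>a. strictly_continuous (\<lambda>r. mmult (membed (\<alpha> r a)) (c r))))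
       \<and> (\<forall>c. c \<in> cocycles \<alpha> central_mult_units \<and> strictly_continuous c
          \<longrightarrow> (\<forall>a. strictly_continuous (\<lambda>r. mmult (membed (\<alpha> r a)) (c r))))"
  using product_sc[OF assms] by blast

end
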